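(* Let $(M,d)$ be a complete separable metric space. Suppose that for every countable ordinal $\alpha<\omega_1$ the metric space $(\mathrm{S}_\alpha(\mathbb{Q}),d_\infty)$ bi-Lipschitzly embeds into $(M,d)$. Then every separable metric space bi-Lipschitzly embeds into $(M,d)$.
   Context: Notation: $[\mathbb{N}]^{<\omega}$ denotes the set of finite subsets of $\mathbb{N}$; for finite $A,B\subset\mathbb{N}$ and $n\in\mathbb{N}$ write $n\le A<B$ if $n\le\min A\le\max A<\min B$. Schreier families $\mathrm{S}_\alpha\subset[\mathbb{N}]^{<\omega}$, $\alpha<\omega_1$, are defined recursively: $\mathrm{S}_0=\{\{n\}:n\in\mathbb{N}\}$; $\mathrm{S}_{\alpha+1}=\{\bigcup_{j=1}^n E_j: n\in\mathbb{N}, E_j\in\mathrm{S}_\alpha, n\le E_1<E_2<\dots<E_n\}$; for a limit ordinal $\beta$, with a fixed sequence $(\alpha_n)$ of ordinals increasing to $\beta$, $\mathrm{S}_\beta=\{A\in[\mathbb{N}]^{<\omega}:\exists n\in\mathbb{N},\ n\le A \text{ and } A\in\mathrm{S}_{\alpha_n}\}$. For a countable set $\mathbb{E}\subset\mathbb{R}$, $\mathrm{S}_\alpha(\mathbb{E})=\{\sum_{i\in G}c_ie_i: G\in\mathrm{S}_\alpha,\ c_i\in\mathbb{E}\}\subset c_{00}$, where $(e_i)$ is the unit vector basis, equipped with the metric $d_\infty$ induced by the sup norm of $c_0$. A map $f:X\to Y$ between metric spaces is a bi-Lipschitz embedding if there are $s>0$, $D\ge1$ with $s\,d_X(x,y)\le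 d_Y(f(x),f(y))\le sD\,d_X(x,y)$ for all $x,y$. *)

theory Defs
  imports "HOL-Analysis.Analysis"
begin

text \<open>Naturals \<nat> = {1,2,...} are modelled as nat with the guard n \<ge> 1.\<close>

definition nle :: "nat \<Rightarrow> nat set \<Rightarrow> bool" where
  "nle n A \<longleftrightarrow> (\<forall>a\<in>A. n \<le> a)"

definition blt :: "nat set \<Rightarrow> nat set \<Rightarrow> bool" where
  "blt A B \<longleftrightarrow> (\<forall>a\<in>A. \<forall>b\<in>B. a < b)"

definition is_succ_of :: "'i::wellorder \<Rightarrow> 'i \<Rightarrow> bool" where
  "is_succ_of b a \<longleftrightarrow> a < b \<and> \<not> (\<exists>k. a < k \<and> k < b)"

definition is_limit :: "'i::wellorder \<Rightarrow> bool" where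
  "is_limit b \<longleftrightarrow> (\<exists>a. a < b) \<and> \<not> (\<exists>a. is_succ_of b a)"

definition fundamental_system :: "('i::wellorder \<Rightarrow> nat \<Rightarrow> 'i) \<Rightarrow> bool" where
  "fundamental_system seq \<longleftrightarrow>
     (\<forall>b. is_limit b \<longrightarrow>
        strict_mono_on {1..} (seq b) \<and> (\<forall>n\<ge>1. seq b n < b) \<and> (\<forall>a<b. \<exists>n\<ge>1. a < seq b n))"

definition schreier_system :: "('i::wellorder \<Rightarrow> nat \<Rightarrow> 'i) \<Rightarrow> ('i \<Rightarrow> nat set set) \<Rightarrow> bool" where
  "schreier_system seq S \<longleftrightarrow>
     (\<forall>a. \<not> (\<exists>b. b < a) \<longrightarrow> S a = {{n} | n. n \<ge> 1}) \<and>
     (\<forall>a b. is_succ_of b a \<longrightarrow>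
        S b = {(\<Union>j\<in>{1..n}. E j) | n E. n \<ge> 1 \<and> (\<forall>j\<in>{1..n}. E j \<in> S a) \<and>
                  nle n (E 1) \<and> (\<forall>j\<in>{1..<n}. blt (E j) (E (Suc j)))}) \<and>
     (\<forall>b. is_limit b \<longrightarrow> S b = {A. \<exists>n\<ge>1. nle n A \<and> A \<in> S (seq b n)})"

text \<open>The sup metric on c_00 (vectors as nat \<Rightarrow> real; coordinate 0 unused).\<close>
definition dinf :: "(nat \<Rightarrow> real) \<Rightarrow> (nat \<Rightarrow> real) \<Rightarrow> real" where
  "dinf x y = (SUP i. \<bar>x i - y i\<bar>)"

definition schreier_Q :: "nat set set \<Rightarrow> (nat \<Rightarrow> real) set" where
  "schreier_Q F = {x. \<exists>G\<in>F. \<exists>c. (\<forall>i\<in>G. c i \<in> \<rat>) \<and> x = (\<lambda>i. if i \<in> G then c i else 0)}"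

definition bilip_embedding ::
  "('a \<Rightarrow> 'a \<Rightarrow> real) \<Rightarrow> 'a set \<Rightarrow> ('b \<Rightarrow> 'b \<Rightarrow> real) \<Rightarrow> 'b set \<Rightarrow> ('a \<Rightarrow> 'b) \<Rightarrow> bool" where
  "bilip_embedding dX X dY Y f \<longleftrightarrow> f ` X \<subseteq> Y \<and>
     (\<exists>s>0. \<exists>D\<ge>1. \<forall>x\<in>X. \<forall>y\<in>X. s * dX x y \<le> dY (f x) (f y) \<and> dY (f x) (f y) \<le> s * D * dX x y)"

definition separable_set :: "'a::metric_space set \<Rightarrow> bool" where
  "separable_set X \<longleftrightarrow> (\<exists>D. countable D \<and> D \<subseteq> X \<and> X \<subseteq> closure D)"

end

theory Submission
  imports Defs
begin

lemma exists_greater: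
  assumes pred: "\<forall>a::'i::wellorder. countable {b. b < a}"
    and unc: "\<not> countable (UNIV :: 'i set)"
  shows "\<exists>b. (a::'i) < b"
proof (rule ccontr)
  assume "\<not> (\<exists>b. a < b)"
  then have "x = a \<or> x < a" for x :: 'i using linorder_less_linear[of x a] by blast
  then have U: "UNIV = insert a {b. b < a}" by auto
  have "countable (UNIV::'i set)" by (subst U) (use pred in simp)
  then show False using unc by (rule notE[rotated])
qed

lemma countable_bounded:
  assumes pred: "\<forall>a::'i::wellorder. countable {b. b < a}"
    and unc: "\<not> countable (UNIV :: 'i set)"
    and Y: "countable (Y::'i set)"
  shows "\<exists>g. \<forall>y\<in>Y. y < g"
proof -
  have c: "countable (\<Union>y\<in>Y. insert y {b. b < y})"
    using Y pred by (auto intro!: countable_UN)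
  have "(\<Union>y\<in>Y. insert y {b. b < y}) \<noteq> UNIV"
  proof
    assume "(\<Union>y\<in>Y. insert y {b. b < y}) = UNIV"
    then show False using c unc by simp
  qed
  then obtain g where "g \<notin> (\<Union>y\<in>Y. insert y {b. b < y})" by blast
  then have "\<forall>y\<in>Y. g \<noteq> y \<and> \<not> g < y" by auto
  then have "\<forall>y\<in>Y. y < g" by (meson linorder_neqE)
  then show ?thesis by blast
qed

lemma cofinal_key:
  fixes K :: "'i::wellorder \<Rightarrow> 'k::countable"
  assumes pred: "\<forall>a::'i::wellorder. countable {b. b < a}"
    and unc: "\<not> countable (UNIV :: 'i set)"
  shows "\<exists>\<kappa>. \<forall>a. \<exists>b. a \<le> b \<and> K b = \<kappa>"
proof (rule ccontr)
  assume "\<not> ?thesis"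
  then have "\<forall>\<kappa>. \<exists>a. \<forall>b. a \<le> b \<longrightarrow> K b \<noteq> \<kappa>" by blast
  from choice[OF this] obtain af where af: "\<forall>\<kappa> b. af \<kappa> \<le> b \<longrightarrow> K b \<noteq> \<kappa>" by blast
  have cr: "countable (range af)" by simp
  from countable_bounded[OF pred unc cr] obtain g where g: "\<forall>y\<in>range af. y < g" by blast
  have "af (K g) \<le> g" using g by (simp add: less_imp_le)
  then show False using spec[OF spec[OF af, of "K g"], of g] by simp
qed

lemma trichotomy:
  fixes b :: "'i::wellorder"
  shows "(\<not> (\<exists>a. a < b)) \<or> (\<exists>a. is_succ_of b a) \<or> is_limit b"
  unfolding is_limit_def by blast

lemma succ_exists:
  assumes "\<exists>k. (a::'i::wellorder) < k"
  shows "\<exists>s. is_succ_of s a"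
proof -
  define s where "s = (LEAST k. a < k)"
  have "a < s" unfolding s_def using assms by (rule LeastI_ex)
  moreover have "\<not> (\<exists>k. a < k \<and> k < s)" unfolding s_def using not_less_Least by blast
  ultimately show ?thesis unfolding is_succ_of_def by blast
qed

context
  fixes seq :: "'i::wellorder \<Rightarrow> nat \<Rightarrow> 'i" and S :: "'i \<Rightarrow> nat set set"
  assumes fs: "fundamental_system seq" and ss: "schreier_system seq S"
begin

lemma S_min: "\<not> (\<exists>b. b < a) \<Longrightarrow> S a = {{n} | n. n \<ge> 1}"
  by (rule mp[OF spec[OF ss[unfolded schreier_system_def, THEN conjunct1]]])

lemma S_succ: "is_succ_of b a \<Longrightarrow>
        S b = {(\<Union>j\<in>{1..n}. E j) | n E. n \<ge> 1 \<and> (\<forall>j\<in>{1..n}. E j \<in> S a) \<and>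
                  nle n (E 1) \<and> (\<forall>j\<in>{1..<n}. blt (E j) (E (Suc j)))}"
  by (rule mp[OF spec[OF spec[OF ss[unfolded schreier_system_def, THEN conjunct2, THEN conjunct1]]]])

lemma S_lim: "is_limit b \<Longrightarrow> S b = {A. \<exists>n\<ge>1. nle n A \<and> A \<in> S (seq b n)}"
  by (rule mp[OF spec[OF ss[unfolded schreier_system_def, THEN conjunct2, THEN conjunct2]]])

lemma fs_lim: "is_limit b \<Longrightarrow> (\<forall>n\<ge>1. seq b n < b) \<and> (\<forall>a<b. \<exists>n\<ge>1. a < seq b n)"
  by (rule conjunct2[OF mp[OF spec[OF fs[unfolded fundamental_system_def]]]])

lemma S_single: "m \<ge> 1 \<Longrightarrow> {m} \<in> S g"
proof (induction g rule: less_induct)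
  case (less b)
  consider "\<not> (\<exists>a. a < b)" | a where "is_succ_of b a" | "is_limit b"
    using trichotomy by blast
  then show ?case
  proof cases
    case 1 then show ?thesis using S_min less by auto
  next
    case 2
    have "a < b" using 2 by (simp add: is_succ_of_def)
    then have "{m} \<in> S a" using less by blast
    then have "(\<Union>j\<in>{1..1::nat}. (\<lambda>_. {m}) j) \<in> S b"
      unfolding S_succ[OF 2] using less.prems
      by (intro CollectI exI[of _ 1] exI[of _ "\<lambda>_. {m}"] conjI refl) (auto simp: nle_def)
    then show ?thesis by simp
  next
    case 3
    have "seq b 1 < b" using fs_lim[OF 3] by auto
    then have "{m} \<in> S (seq b 1)" using less by blast
    then show ?thesis unfolding S_lim[OF 3] using less.prems by (auto simp: nle_def)
  qed
qed

lemma S_almost_incl: "g \<le> b \<Longrightarrow> \<exists>p\<ge>1. \<forall>B\<in>S g. nle p B \<longrightarrow> B \<in> S b"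
proof (induction b arbitrary: g rule: less_induct)
  case (less b)
  show ?case
  proof (cases "g = b")
    case True then show ?thesis by (intro exI[of _ 1]) auto
  next
    case False
    then have gb: "g < b" using less.prems by simp
    consider "\<not> (\<exists>a. a < b)" | a where "is_succ_of b a" | "is_limit b"
      using trichotomy by blast
    then show ?thesis
    proof cases
      case 1 then show ?thesis using gb by blast
    next
      case 2
      have "a < b" "g \<le> a" using 2 gb unfolding is_succ_of_def by (meson not_less)+
      then obtain p where p: "p \<ge> 1" "\<forall>B\<in>S g. nle p B \<longrightarrow> B \<in> S a" using less by blast
      have "B \<in> S b" if "B \<in> S g" "nle p B" for B
      proof -
        have "B \<in> S a" using p that by blast
        moreover have "nle 1 B" using that p by (auto simp: nle_def)
        ultimately have "(\<Union>j\<in>{1..1::nat}. (\<lambda>_. B) j) \<in> S b"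
          unfolding S_succ[OF 2] by (intro CollectI exI[of _ 1] exI[of _ "\<lambda>_. B"] conjI refl) auto
        then show ?thesis by simp
      qed
      then show ?thesis using p by blast
    next
      case 3
      obtain n where n: "n \<ge> 1" "g < seq b n" using fs_lim[OF 3] gb by blast
      have "seq b n < b" using fs_lim[OF 3] n by auto
      then obtain p where p: "p \<ge> 1" "\<forall>B\<in>S g. nle p B \<longrightarrow> B \<in> S (seq b n)"
        using less n by (meson less_imp_le)
      have "B \<in> S b" if "B \<in> S g" "nle (max p n) B" for B
      proof -
        have "nle p B" "nle n B" using that by (auto simp: nle_def)
        then show ?thesis using p that n unfolding S_lim[OF 3] by blast
      qed
      then show ?thesis using p by (intro exI[of _ "max p n"]) auto
    qed
  qed
qed

lemma S_insert:
  assumes pred: "\<forall>a::'i. countable {b. b < a}"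
    and unc: "\<not> countable (UNIV :: 'i set)"
    and gb: "g < b"
  shows "\<exists>m\<ge>n. \<exists>n'>m. \<forall>B\<in>S g. nle n' B \<longrightarrow> insert m B \<in> S b"
proof -
  obtain s where s: "is_succ_of s g" using succ_exists exists_greater[OF pred unc] by blast
  have "s \<le> b" using s gb unfolding is_succ_of_def by (meson not_le)
  then obtain p where p: "p \<ge> 1" "\<forall>B\<in>S s. nle p B \<longrightarrow> B \<in> S b" using S_almost_incl by blast
  define m where "m = max n (max p 2)"
  have ins: "insert m B \<in> S b" if B: "B \<in> S g" "nle (Suc m) B" for B
  proof -
    define E where "E = (\<lambda>j::nat. if j = 1 then {m} else B)"
    have "{m} \<in> S g" using S_single m_def by simp
    have i12: "{1..2::nat} = {1,2}" "{1..<2::nat} = {1}" by auto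
    have "\<forall>j\<in>{1..2::nat}. E j \<in> S g" using \<open>{m} \<in> S g\<close> B(1) unfolding i12 E_def by simp
    moreover have "nle 2 (E 1)" by (simp add: E_def nle_def m_def)
    moreover have "\<forall>j\<in>{1..<2::nat}. blt (E j) (E (Suc j))"
      using B(2) unfolding i12 by (auto simp: E_def blt_def nle_def)
    ultimately have "(\<Union>j\<in>{1..2}. E j) \<in> S s"
      unfolding S_succ[OF s] by (intro CollectI exI[of _ 2] exI[of _ E] conjI refl) auto
    moreover have "(\<Union>j\<in>{1..2::nat}. E j) = insert m B"
    proof -
      have "{1..2::nat} = {1,2}" by auto
      then show ?thesis by (simp add: E_def)
    qed
    ultimately have "insert m B \<in> S s" by simp
    moreover have "nle p (insert m B)" using B by (auto simp: nle_def m_def)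
    ultimately show ?thesis using p by blast
  qed
  have "n \<le> m" by (simp add: m_def)
  moreover have "\<exists>n'>m. \<forall>B\<in>S g. nle n' B \<longrightarrow> insert m B \<in> S b"
    using ins by (intro exI[of _ "Suc m"]) simp
  ultimately show ?thesis by blast
qed

end


inductive Rk :: "'n set \<Rightarrow> ('n \<Rightarrow> 'n \<Rightarrow> bool) \<Rightarrow> 'i::wellorder \<Rightarrow> 'n \<Rightarrow> bool"
  for T ch where
  "t \<in> T \<Longrightarrow> (\<forall>b. b < a \<longrightarrow> (\<exists>c. ch t c \<and> Rk T ch b c)) \<Longrightarrow> Rk T ch a t"

lemma Rk_T: "Rk T ch a t \<Longrightarrow> t \<in> T"
  by (erule Rk.cases) simp

lemma Rk_mono: assumes "Rk T ch a t" "b \<le> a" shows "Rk T ch b t"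
  using assms(1)
proof (cases rule: Rk.cases)
  case 1
  show ?thesis
  proof (rule Rk.intros)
    show "t \<in> T" by fact
    show "\<forall>c. c < b \<longrightarrow> (\<exists>d. ch t d \<and> Rk T ch c d)"
    proof (intro allI impI)
      fix c assume "c < b"
      then have "c < a" using assms(2) by (rule less_le_trans)
      then show "\<exists>d. ch t d \<and> Rk T ch c d" using 1(2) by blast
    qed
  qed
qed

lemma Rk_choice:
  fixes Z :: "'n set"
  assumes pred: "\<forall>a::'i::wellorder. countable {b. b < a}"
    and unc: "\<not> countable (UNIV :: 'i set)"
    and Z: "countable Z"
    and all: "\<forall>a::'i. \<exists>t\<in>Z. Rk T ch a t"
  shows "\<exists>t\<in>Z. \<forall>a::'i. Rk T ch a t"
proof (rule ccontr)
  assume "\<not> ?thesis"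
  then have "\<forall>t\<in>Z. \<exists>a::'i. \<not> Rk T ch a t" by blast
  from bchoice[OF this] obtain af :: "'n \<Rightarrow> 'i" where af: "\<forall>t\<in>Z. \<not> Rk T ch (af t) t" by blast
  have cr: "countable (af ` Z)" using Z by simp
  from countable_bounded[OF pred unc cr] obtain g where g: "\<forall>y\<in>af ` Z. y < g" by blast
  from all obtain t where t: "t \<in> Z" "Rk T ch g t" by blast
  have "af t \<le> g" using g t(1) by (simp add: less_imp_le)
  then have "Rk T ch (af t) t" by (rule Rk_mono[OF t(2)])
  then show False using af t(1) by blast
qed

lemma Rk_branch:
  fixes Z :: "'n set" and T :: "'n set"
  assumes pred: "\<forall>a::'i::wellorder. countable {b. b < a}"
    and unc: "\<not> countable (UNIV :: 'i set)"
    and cc: "\<forall>t\<in>T. countable {c. ch t c \<and> c \<in> T}"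
    and Z: "countable Z"
    and all: "\<forall>a::'i. \<exists>t\<in>Z. Rk T ch a t"
  shows "\<exists>f. f 0 \<in> Z \<and> (\<forall>n. f n \<in> T \<and> ch (f n) (f (Suc n)))"
proof -
  define G where "G t \<longleftrightarrow> (\<forall>a::'i. Rk T ch a t)" for t
  have X: "\<exists>t\<in>Z. \<forall>a::'i. Rk T ch a t" by (rule Rk_choice[OF pred unc Z all])
  then obtain t0 where t0': "t0 \<in> Z" "\<forall>a::'i. Rk T ch a t0" by auto
  have t0: "t0 \<in> Z" "G t0" unfolding G_def by (rule t0'(1), rule t0'(2))
  have step: "\<exists>c. G c \<and> ch t c" if Gt: "G t" for t
  proof -
    have "Rk T ch (undefined::'i) t" using Gt unfolding G_def by (rule spec)
    then have tT: "t \<in> T" by (rule Rk_T)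
    have "\<forall>a::'i. \<exists>c\<in>{c. ch t c \<and> c \<in> T}. Rk T ch a c"
    proof
      fix a :: 'i
      obtain d where "a < d" using exists_greater[OF pred unc] by blast
      have "Rk T ch d t" using Gt unfolding G_def by (rule spec)
      then have "\<forall>b. b < d \<longrightarrow> (\<exists>c. ch t c \<and> Rk T ch b c)" by (cases rule: Rk.cases) simp
      then obtain c where c: "ch t c" "Rk T ch a c" using \<open>a < d\<close> by blast
      have "c \<in> T" using c(2) by (rule Rk_T)
      then show "\<exists>c\<in>{c. ch t c \<and> c \<in> T}. Rk T ch a c" using c by blast
    qed
    moreover have "countable {c. ch t c \<and> c \<in> T}" using cc tT by blast
    ultimately have "\<exists>c\<in>{c. ch t c \<and> c \<in> T}. \<forall>a::'i. Rk T ch a c"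
      by (intro Rk_choice[OF pred unc])
    then obtain c where c: "c \<in> {c. ch t c \<and> c \<in> T}" "\<forall>a::'i. Rk T ch a c"
      by auto
    have "G c" unfolding G_def by (rule c(2))
    moreover have "ch t c" using c(1) by simp
    ultimately show ?thesis by blast
  qed
  define P where "P (n::nat) t \<longleftrightarrow> G t \<and> (n = 0 \<longrightarrow> t = t0)" for n t
  have "\<exists>f. \<forall>n. P n (f n) \<and> ch (f n) (f (Suc n))"
  proof (rule dependent_nat_choice)
    show "\<exists>x. P 0 x" using t0 unfolding P_def by blast
    fix x n assume "P n x"
    then have "G x" unfolding P_def by blast
    then obtain c where "G c" "ch x c" using step by blast
    then show "\<exists>y. P (Suc n) y \<and> ch x y" unfolding P_def by blast
  qed
  then obtain f where f: "\<forall>n. G (f n) \<and> (n = 0 \<longrightarrow> f n = t0) \<and> ch (f n) (f (Suc n))"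
    unfolding P_def by blast
  have fT: "f n \<in> T" for n
  proof -
    have "G (f n)" using f by simp
    then have "Rk T ch (undefined::'i) (f n)" unfolding G_def by (rule spec)
    then show ?thesis by (rule Rk_T)
  qed
  have "f 0 = t0" using f by simp
  then have "f 0 \<in> Z" using t0(1) by simp
  moreover have "\<forall>n. f n \<in> T \<and> ch (f n) (f (Suc n))" using f fT by simp
  ultimately show ?thesis by blast
qed

context
  fixes seq :: "'i::wellorder \<Rightarrow> nat \<Rightarrow> 'i" and S :: "'i \<Rightarrow> nat set set"
  assumes fs: "fundamental_system seq" and ss: "schreier_system seq S"
    and pred: "\<forall>a::'i. countable {b. b < a}"
    and unc: "\<not> countable (UNIV :: 'i set)"
begin

lemma rank_lemma:
  fixes \<Phi> :: "nat set \<Rightarrow> 'n" and F :: "nat set set"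
  assumes inT: "\<And>A. finite A \<Longrightarrow> A \<in> F \<Longrightarrow> \<Phi> A \<in> T"
    and inch: "\<And>A m. finite A \<Longrightarrow> insert m A \<in> F \<Longrightarrow> (\<forall>a\<in>A. a < m) \<Longrightarrow> ch (\<Phi> A) (\<Phi> (insert m A))"
    and Fdown: "\<And>A B. A \<subseteq> B \<Longrightarrow> B \<in> F \<Longrightarrow> A \<in> F"
  shows "finite A \<Longrightarrow> A \<in> F \<Longrightarrow> (\<forall>a\<in>A. a < n) \<Longrightarrow> (\<forall>B\<in>S b. nle n B \<longrightarrow> A \<union> B \<in> F)
     \<Longrightarrow> Rk T ch b (\<Phi> A)"
proof (induction b arbitrary: A n rule: less_induct)
  case (less b)
  show ?case
  proof (rule Rk.intros)
    show "\<Phi> A \<in> T" using inT less.prems by blast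
    show "\<forall>g. g < b \<longrightarrow> (\<exists>c. ch (\<Phi> A) c \<and> Rk T ch g c)"
    proof (intro allI impI)
      fix g assume gb: "g < b"
      obtain m n' where m: "m \<ge> n" "n' > m" and mB: "\<forall>B\<in>S g. nle n' B \<longrightarrow> insert m B \<in> S b"
        using S_insert[OF fs ss pred unc gb, of n] by blast
      have n'1: "n' \<ge> 1" using m by simp
      have AB: "insert m A \<union> B \<in> F" if "B \<in> S g" "nle n' B" for B
      proof -
        have "insert m B \<in> S b" using mB that by blast
        moreover have "nle n (insert m B)" using that m by (auto simp: nle_def)
        ultimately have "A \<union> insert m B \<in> F" using less.prems by blast
        then show ?thesis by simp
      qed
      have "{n'} \<in> S g" using S_single[OF fs ss n'1] .
      moreover have "nle n' {n'}" by (simp add: nle_def)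
      ultimately have "insert m A \<union> {n'} \<in> F" using AB by blast
      then have mA: "insert m A \<in> F" using Fdown by blast
      have lt: "\<forall>a\<in>A. a < m" using less.prems m by auto
      have "ch (\<Phi> A) (\<Phi> (insert m A))" using inch less.prems mA lt by blast
      moreover have "Rk T ch g (\<Phi> (insert m A))"
      proof (rule less.IH[OF gb])
        show "finite (insert m A)" using less.prems by simp
        show "insert m A \<in> F" by fact
        show "\<forall>a\<in>insert m A. a < n'" using lt m less.prems by auto
        show "\<forall>B\<in>S g. nle n' B \<longrightarrow> insert m A \<union> B \<in> F" using AB by blast
      qed
      ultimately show "\<exists>c. ch (\<Phi> A) c \<and> Rk T ch g c" by blast
    qed
  qed
qed

end


definition Gr :: "nat \<Rightarrow> real set" where
  "Gr k = insert 0 ((\<lambda>n. of_rat (from_nat n)) ` {..k})"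

definition VV :: "nat set \<Rightarrow> (nat \<Rightarrow> real) set" where
  "VV A = {v. (\<forall>i. i \<notin> A \<longrightarrow> v i = 0) \<and> (\<forall>i\<in>A. v i \<in> Gr (card A))}"

definition eta :: "nat \<Rightarrow> real" where
  "eta k = 1 / 2 ^ k"

definition Tn :: "real \<Rightarrow> real \<Rightarrow> 'm::metric_space set \<Rightarrow> (nat set \<times> ((nat \<Rightarrow> real) \<Rightarrow> 'm)) set" where
  "Tn L U C = {(A, h). finite A \<and> h \<in> VV A \<rightarrow>\<^sub>E C \<and>
      (\<forall>v\<in>VV A. \<forall>w\<in>VV A. L * dinf v w - eta (card A) \<le> dist (h v) (h w) \<and>
          dist (h v) (h w) \<le> U * dinf v w + eta (card A))}"

definition chn :: "(nat set \<times> ((nat \<Rightarrow> real) \<Rightarrow> 'm::metric_space)) \<Rightarrow> (nat set \<times> ((nat \<Rightarrow> real) \<Rightarrow> 'm)) \<Rightarrow> bool" where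
  "chn t t' \<longleftrightarrow> (\<exists>m. (\<forall>a\<in>fst t. a < m) \<and> fst t' = insert m (fst t)) \<and>
      (\<forall>v\<in>VV (fst t). dist (snd t' v) (snd t v) \<le> eta (card (fst t)))"

lemma Gr_finite: "finite (Gr k)" by (simp add: Gr_def)

lemma Gr_mono: "k \<le> l \<Longrightarrow> Gr k \<subseteq> Gr l" by (auto simp: Gr_def)

lemma Gr_Rats: "x \<in> Gr k \<Longrightarrow> x \<in> \<rat>" by (auto simp: Gr_def)

lemma Gr_exhaust: "q \<in> \<rat> \<Longrightarrow> \<exists>k. q \<in> Gr k"
proof -
  assume "q \<in> \<rat>"
  then obtain r where r: "q = of_rat r" by (auto simp: Rats_def)
  have "r = from_nat (to_nat r)" by simp
  then have "q \<in> Gr (to_nat r)" unfolding Gr_def r by (intro insertI2 image_eqI[of _ _ "to_nat r"]) auto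
  then show ?thesis by blast
qed

lemma VV_finite:
  assumes "finite A" shows "finite (VV A)"
proof -
  have "VV A \<subseteq> (\<lambda>g i. if i \<in> A then g i else 0) ` (PiE A (\<lambda>_. Gr (card A)))"
  proof
    fix v assume v: "v \<in> VV A"
    have "v = (\<lambda>i. if i \<in> A then restrict v A i else 0)"
      using v by (auto simp: VV_def)
    moreover have "restrict v A \<in> PiE A (\<lambda>_. Gr (card A))" using v by (auto simp: VV_def)
    ultimately show "v \<in> (\<lambda>g i. if i \<in> A then g i else 0) ` (PiE A (\<lambda>_. Gr (card A)))" by blast
  qed
  moreover have "finite (PiE A (\<lambda>_. Gr (card A)))" using assms by (simp add: finite_PiE Gr_finite)
  ultimately show ?thesis using finite_subset by blast
qed

lemma VV_mono:
  assumes "finite A" "m \<notin> A" shows "VV A \<subseteq> VV (insert m A)"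
proof
  fix v assume v: "v \<in> VV A"
  have "card (insert m A) = Suc (card A)" using assms by simp
  then have "Gr (card A) \<subseteq> Gr (card (insert m A))" by (simp add: Gr_mono)
  moreover have "0 \<in> Gr k" for k by (simp add: Gr_def)
  ultimately show "v \<in> VV (insert m A)" using v by (auto simp: VV_def)
qed

lemma VV_mono2:
  assumes "finite B" "A \<subseteq> B" shows "VV A \<subseteq> VV B"
proof
  fix v assume v: "v \<in> VV A"
  have "card A \<le> card B" using assms by (simp add: card_mono)
  then have "Gr (card A) \<subseteq> Gr (card B)" by (simp add: Gr_mono)
  moreover have "0 \<in> Gr k" for k by (simp add: Gr_def)
  ultimately show "v \<in> VV B" using v assms by (auto simp: VV_def)
qed

lemma dinf_ge:
  assumes "finite {i. v i \<noteq> w i}"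
  shows "\<bar>v i - w i\<bar> \<le> dinf v w" "0 \<le> dinf v w"
proof -
  have "range (\<lambda>i. \<bar>v i - w i\<bar>) \<subseteq> insert 0 ((\<lambda>i. \<bar>v i - w i\<bar>) ` {i. v i \<noteq> w i})" by auto
  moreover have "finite (insert 0 ((\<lambda>i. \<bar>v i - w i\<bar>) ` {i. v i \<noteq> w i}))" using assms by simp
  ultimately have "bdd_above (range (\<lambda>i. \<bar>v i - w i\<bar>))"
    by (meson bdd_above_mono bdd_above_finite)
  then show 1: "\<bar>v i - w i\<bar> \<le> dinf v w" for i unfolding dinf_def by (intro cSUP_upper) auto
  show "0 \<le> dinf v w" using 1[of 0] by linarith
qed

lemma dinf_le:
  assumes "\<And>i. \<bar>v i - w i\<bar> \<le> c" shows "dinf v w \<le> c"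
  unfolding dinf_def using assms by (intro cSUP_least) auto

lemma VV_fin_diff:
  assumes "finite A" "v \<in> VV A" "w \<in> VV A" shows "finite {i. v i \<noteq> w i}"
proof -
  have "{i. v i \<noteq> w i} \<subseteq> A"
  proof
    fix i assume i: "i \<in> {i. v i \<noteq> w i}"
    show "i \<in> A"
    proof (rule ccontr)
      assume "i \<notin> A"
      then have "v i = 0" "w i = 0" using assms by (auto simp: VV_def)
      then show False using i by simp
    qed
  qed
  then show ?thesis using assms(1) finite_subset by blast
qed

lemma countable_children:
  assumes C: "countable C" and t: "t \<in> Tn L U C"
  shows "countable {c. chn t c \<and> c \<in> Tn L U C}"
proof -
  obtain A h where th: "t = (A, h)" by (cases t)
  have fA: "finite A" using t th by (simp add: Tn_def)
  have "{c. chn t c \<and> c \<in> Tn L U C} \<subseteq> (\<Union>m. {insert m A} \<times> (VV (insert m A) \<rightarrow>\<^sub>E C))"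
  proof
    fix c assume c: "c \<in> {c. chn t c \<and> c \<in> Tn L U C}"
    obtain A' h' where ch: "c = (A', h')" by (cases c)
    obtain m where m: "A' = insert m A" using c ch th by (auto simp: chn_def)
    have "h' \<in> VV A' \<rightarrow>\<^sub>E C" using c ch by (simp add: Tn_def)
    then show "c \<in> (\<Union>m. {insert m A} \<times> (VV (insert m A) \<rightarrow>\<^sub>E C))" using ch m by blast
  qed
  moreover have "countable (\<Union>m. {insert m A} \<times> (VV (insert m A) \<rightarrow>\<^sub>E C))"
    using fA C by (intro countable_UN countable_SIGMA countable_PiE VV_finite) auto
  ultimately show ?thesis using countable_subset by blast
qed

lemma countable_roots:
  assumes C: "countable C"
  shows "countable {t \<in> Tn L U C. fst t = {}}"
proof -
  have "{t \<in> Tn L U C. fst t = {}} \<subseteq> {{}} \<times> (VV {} \<rightarrow>\<^sub>E C)"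
    by (auto simp: Tn_def)
  moreover have "countable ({{}} \<times> (VV {} \<rightarrow>\<^sub>E C))"
    using C by (intro countable_SIGMA countable_PiE VV_finite) auto
  ultimately show ?thesis using countable_subset by blast
qed


lemma cauchy_bound:
  fixes X :: "nat \<Rightarrow> 'a::metric_space"
  assumes b: "b \<longlonglongrightarrow> 0" and d: "\<And>m n. k \<le> n \<Longrightarrow> n \<le> m \<Longrightarrow> dist (X m) (X n) \<le> b n"
  shows "Cauchy X"
  unfolding Cauchy_def
proof (intro allI impI)
  fix e :: real assume e: "e > 0"
  then have "e/2 > 0" by simp
  from LIMSEQ_D[OF b this] obtain M where M: "\<And>n. n \<ge> M \<Longrightarrow> norm (b n - 0) < e/2" by blast
  define M' where "M' = max M k"
  have "dist (X m) (X n) < e" if "m \<ge> M'" "n \<ge> M'" for m n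
  proof -
    have "dist (X m) (X M') \<le> b M'" using d[of M' m] that by (simp add: M'_def)
    moreover have "dist (X n) (X M') \<le> b M'" using d[of M' n] that by (simp add: M'_def)
    moreover have "b M' < e/2" using M[of M'] by (simp add: M'_def)
    moreover have "dist (X m) (X n) \<le> dist (X m) (X M') + dist (X n) (X M')" by (rule dist_triangle2)
    ultimately show ?thesis by linarith
  qed
  then show "\<exists>M. \<forall>m\<ge>M. \<forall>n\<ge>M. dist (X m) (X n) < e" by blast
qed

lemma eta_lim: "eta \<longlonglongrightarrow> 0"
proof -
  have "(\<lambda>n. inverse ((2::real) ^ n)) \<longlonglongrightarrow> 0" by (rule LIMSEQ_inverse_realpow_zero) simp
  moreover have "eta = (\<lambda>n. inverse ((2::real) ^ n))" by (auto simp: eta_def divide_inverse)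
  ultimately show ?thesis by simp
qed

lemma eta_Suc: "eta (Suc n) = eta n / 2" by (simp add: eta_def)

lemma eta_pos: "eta n > 0" by (simp add: eta_def)

lemma finite_eventually:
  assumes "finite S" "\<forall>i\<in>S. \<exists>k. \<forall>n\<ge>k. P i n"
  shows "\<exists>k::nat. \<forall>i\<in>S. \<forall>n\<ge>k. P i n"
  using assms
proof (induction S rule: finite_induct)
  case empty then show ?case by simp
next
  case (insert x F)
  obtain k1 where k1: "\<forall>i\<in>F. \<forall>n\<ge>k1. P i n" using insert by blast
  obtain k2 where k2: "\<forall>n\<ge>k2. P x n" using insert by blast
  have "\<forall>i\<in>insert x F. \<forall>n\<ge>max k1 k2. P i n" using k1 k2 by auto
  then show ?case by blast
qed

definition Wset :: "nat set \<Rightarrow> (nat \<Rightarrow> real) set" where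
  "Wset N = {v. finite {i. v i \<noteq> 0} \<and> (\<forall>i. v i \<noteq> 0 \<longrightarrow> i \<in> N) \<and> (\<forall>i. v i \<in> \<rat>)}"

lemma branch_emb:
  fixes f :: "nat \<Rightarrow> nat set \<times> ((nat \<Rightarrow> real) \<Rightarrow> 'm::complete_space)"
  assumes fT: "\<And>n. f n \<in> Tn L U C" and fch: "\<And>n. chn (f n) (f (Suc n))" and f0: "fst (f 0) = {}"
  shows "\<exists>N (H::(nat \<Rightarrow> real) \<Rightarrow> 'm). infinite N \<and> (\<forall>v\<in>Wset N. \<forall>w\<in>Wset N.
            L * dinf v w \<le> dist (H v) (H w) \<and> dist (H v) (H w) \<le> U * dinf v w)"
proof -
  define A where "A n = fst (f n)" for n
  define h where "h n = snd (f n)" for n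
  have finA: "finite (A n)" for n using fT[of n] unfolding A_def Tn_def by (cases "f n") auto
  have Asuc: "\<exists>m. (\<forall>a\<in>A n. a < m) \<and> A (Suc n) = insert m (A n)" for n
    using fch[of n] unfolding chn_def A_def by blast
  have cardA: "card (A n) = n" for n
  proof (induction n)
    case 0 then show ?case using f0 by (simp add: A_def)
  next
    case (Suc n)
    obtain m where m: "\<forall>a\<in>A n. a < m" "A (Suc n) = insert m (A n)" using Asuc by blast
    have "m \<notin> A n" using m(1) by blast
    then show ?case using m(2) finA[of n] Suc by simp
  qed
  have Amono1: "A n \<subseteq> A (Suc n)" for n using Asuc[of n] by auto
  have Amono: "A n \<subseteq> A m" if "n \<le> m" for n m
    using that
  proof (induction m)
    case 0 then show ?case by simp
  next
    case (Suc m)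
    show ?case
    proof (cases "n \<le> m")
      case True then show ?thesis using Suc.IH Amono1[of m] by blast
    next
      case False then have "n = Suc m" using Suc.prems by simp
      then show ?thesis by simp
    qed
  qed
  have hstep: "dist (h (Suc n) v) (h n v) \<le> eta n" if "v \<in> VV (A n)" for n v
    using fch[of n] that unfolding chn_def A_def h_def cardA[unfolded A_def] by auto
  have hbound: "L * dinf v w - eta n \<le> dist (h n v) (h n w) \<and> dist (h n v) (h n w) \<le> U * dinf v w + eta n"
    if "v \<in> VV (A n)" "w \<in> VV (A n)" for n v w
  proof -
    obtain B g where fn: "f n = (B, g)" by (cases "f n")
    have "B = A n" "g = h n" using fn by (auto simp: A_def h_def)
    then show ?thesis using fT[of n] fn that cardA[of n] unfolding Tn_def by auto
  qed
  define N where "N = (\<Union>n. A n)"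
  have infN: "infinite N"
  proof
    assume fin: "finite N"
    have "card (A (Suc (card N))) \<le> card N" using fin by (intro card_mono) (auto simp: N_def)
    then show False using cardA by simp
  qed
  have evVV: "\<exists>k. \<forall>n\<ge>k. v \<in> VV (A n)" if v: "v \<in> Wset N" for v
  proof -
    define Sv where "Sv = {i. v i \<noteq> 0}"
    have fS: "finite Sv" using v by (simp add: Wset_def Sv_def)
    have "\<forall>i\<in>Sv. \<exists>k. \<forall>n\<ge>k. i \<in> A n \<and> v i \<in> Gr n"
    proof
      fix i assume i: "i \<in> Sv"
      then have "i \<in> N" using v by (simp add: Wset_def Sv_def)
      then obtain k1 where k1: "i \<in> A k1" by (auto simp: N_def)
      have "v i \<in> \<rat>" using v by (simp add: Wset_def)
      then obtain k2 where k2: "v i \<in> Gr k2" using Gr_exhaust by blast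
      have "i \<in> A n \<and> v i \<in> Gr n" if "n \<ge> max k1 k2" for n
        using k1 k2 Amono[of k1 n] Gr_mono[of k2 n] that by auto
      then show "\<exists>k. \<forall>n\<ge>k. i \<in> A n \<and> v i \<in> Gr n" by blast
    qed
    from finite_eventually[OF fS this] obtain k where k: "\<forall>i\<in>Sv. \<forall>n\<ge>k. i \<in> A n \<and> v i \<in> Gr n" by blast
    have "v \<in> VV (A n)" if "n \<ge> k" for n
    proof -
      have "v i = 0" if "i \<notin> A n" for i using k \<open>n \<ge> k\<close> that unfolding Sv_def by blast
      moreover have "v i \<in> Gr (card (A n))" if "i \<in> A n" for i
      proof (cases "v i = 0")
        case True then show ?thesis by (simp add: Gr_def)
      next
        case False then show ?thesis using k \<open>n \<ge> k\<close> cardA[of n] unfolding Sv_def by auto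
      qed
      ultimately show ?thesis by (auto simp: VV_def)
    qed
    then show ?thesis by blast
  qed
  have conv: "(\<lambda>n. h n v) \<longlonglongrightarrow> lim (\<lambda>n. h n v)" if v: "v \<in> Wset N" for v
  proof -
    obtain k where k: "\<forall>n\<ge>k. v \<in> VV (A n)" using evVV[OF v] by blast
    have d: "dist (h (n + j) v) (h n v) \<le> 2 * eta n - 2 * eta (n + j)" if "n \<ge> k" for n j
    proof (induction j)
      case 0 then show ?case by simp
    next
      case (Suc j)
      have "dist (h (Suc (n + j)) v) (h (n + j) v) \<le> eta (n + j)"
        using hstep k that by simp
      moreover have "dist (h (n + Suc j) v) (h n v) \<le> dist (h (Suc (n + j)) v) (h (n + j) v) + dist (h (n + j) v) (h n v)"
        by (simp add: dist_triangle)
      ultimately show ?case using Suc eta_Suc[of "n + j"] by simp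
    qed
    have "dist (h m v) (h n v) \<le> 2 * eta n" if "k \<le> n" "n \<le> m" for m n
    proof -
      obtain j where "m = n + j" using \<open>n \<le> m\<close> le_add_diff_inverse by metis
      then show ?thesis using d[OF \<open>k \<le> n\<close>, of j] eta_pos[of "n + j"] by simp
    qed
    moreover have "(\<lambda>n. 2 * eta n) \<longlonglongrightarrow> 0" using tendsto_mult_right_zero[OF eta_lim, of 2] by simp
    ultimately have "Cauchy (\<lambda>n. h n v)" by (intro cauchy_bound[of "\<lambda>n. 2 * eta n" k]) auto
    then show ?thesis by (simp add: Cauchy_convergent_iff convergent_LIMSEQ_iff)
  qed
  define H where "H v = lim (\<lambda>n. h n v)" for v
  have bounds: "L * dinf v w \<le> dist (H v) (H w) \<and> dist (H v) (H w) \<le> U * dinf v w"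
    if v: "v \<in> Wset N" and w: "w \<in> Wset N" for v w
  proof -
    obtain k1 where k1: "\<forall>n\<ge>k1. v \<in> VV (A n)" using evVV[OF v] by blast
    obtain k2 where k2: "\<forall>n\<ge>k2. w \<in> VV (A n)" using evVV[OF w] by blast
    have hb: "L * dinf v w - eta n \<le> dist (h n v) (h n w) \<and> dist (h n v) (h n w) \<le> U * dinf v w + eta n"
      if "n \<ge> max k1 k2" for n using hbound k1 k2 that by simp
    have lim: "(\<lambda>n. dist (h n v) (h n w)) \<longlonglongrightarrow> dist (H v) (H w)"
      unfolding H_def by (intro tendsto_dist conv v w)
    have l1: "(\<lambda>n. L * dinf v w - eta n) \<longlonglongrightarrow> L * dinf v w - 0"
      by (intro tendsto_diff tendsto_const eta_lim)
    have l2: "(\<lambda>n. U * dinf v w + eta n) \<longlonglongrightarrow> U * dinf v w + 0"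
      by (intro tendsto_add tendsto_const eta_lim)
    have "L * dinf v w - 0 \<le> dist (H v) (H w)"
      using hb by (intro LIMSEQ_le[OF l1 lim]) blast
    moreover have "dist (H v) (H w) \<le> U * dinf v w + 0"
      using hb by (intro LIMSEQ_le[OF lim l2]) blast
    ultimately show ?thesis by simp
  qed
  have "\<forall>v\<in>Wset N. \<forall>w\<in>Wset N. L * dinf v w \<le> dist (H v) (H w) \<and> dist (H v) (H w) \<le> U * dinf v w"
    using bounds by simp
  then have "infinite N \<and> (\<forall>v\<in>Wset N. \<forall>w\<in>Wset N. L * dinf v w \<le> dist (H v) (H w) \<and> dist (H v) (H w) \<le> U * dinf v w)"
    using infN by simp
  then show ?thesis by (rule exI[where x=N, OF exI[where x=H]])
qed


definition psi :: "(nat \<Rightarrow> 'x::metric_space) \<Rightarrow> 'x \<Rightarrow> int \<times> nat \<Rightarrow> real" where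
  "psi xs x z = (if snd z = 0 then 0 else
     max 0 (min (3 * 2 powr real_of_int (fst z) - dist x (xs (snd z))) (infdist x (xs ` {..<snd z}) - 2 powr real_of_int (fst z))))"

lemma psi_nonneg: "0 \<le> psi xs x z"
  by (simp add: psi_def)

lemma maxmin_lip:
  fixes a b a' b' c :: real
  assumes "\<bar>a - a'\<bar> \<le> c" "\<bar>b - b'\<bar> \<le> c"
  shows "\<bar>max 0 (min a b) - max 0 (min a' b')\<bar> \<le> c"
  using assms by (auto simp: max_def min_def abs_if split: if_splits)

lemma psi_lip: "\<bar>psi xs x z - psi xs y z\<bar> \<le> dist x y"
proof (cases "snd z = 0")
  case True then show ?thesis by (simp add: psi_def)
next
  case False
  have 1: "\<bar>(3 * 2 powr real_of_int (fst z) - dist x (xs (snd z))) - (3 * 2 powr real_of_int (fst z) - dist y (xs (snd z)))\<bar> \<le> dist x y"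
    using dist_triangle[of x "xs (snd z)" y] dist_triangle[of y "xs (snd z)" x] by (simp add: dist_commute)
  have 2: "\<bar>(infdist x (xs ` {..<snd z}) - 2 powr real_of_int (fst z)) - (infdist y (xs ` {..<snd z}) - 2 powr real_of_int (fst z))\<bar> \<le> dist x y"
    using infdist_triangle_abs[of x _ y] by simp
  show ?thesis using False maxmin_lip[OF 1 2] by (simp add: psi_def)
qed

lemma psi_le: "psi xs x z \<le> dist x (xs 0)"
proof (cases "snd z = 0")
  case True then show ?thesis by (simp add: psi_def)
next
  case False
  have "infdist x (xs ` {..<snd z}) \<le> dist x (xs 0)" using False by (intro infdist_le) auto
  moreover have "2 powr real_of_int (fst z) > 0" by simp
  ultimately have "infdist x (xs ` {..<snd z}) - 2 powr real_of_int (fst z) \<le> dist x (xs 0)" by linarith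
  then have "min (3 * 2 powr real_of_int (fst z) - dist x (xs (snd z))) (infdist x (xs ` {..<snd z}) - 2 powr real_of_int (fst z)) \<le> dist x (xs 0)"
    by (rule min.coboundedI2)
  then show ?thesis using False by (simp add: psi_def)
qed

lemma infdist_ge_img:
  assumes "n > 0" "\<And>i. i < n \<Longrightarrow> c \<le> dist x (xs i)"
  shows "c \<le> infdist x (xs ` {..<n})"
proof -
  have ne: "xs ` {..<n} \<noteq> {}" using assms by auto
  show ?thesis unfolding infdist_notempty[OF ne] using assms(2) by (intro cINF_greatest ne) auto
qed

lemma psi_sep1:
  fixes xs :: "nat \<Rightarrow> 'x::metric_space"
  assumes r: "r = 2 powr k" and t: "5 * r \<le> dist x y"
    and j: "dist x (xs j) < 2 * r" "\<And>i. i < j \<Longrightarrow> 2 * r \<le> dist x (xs i)" and j1: "j \<ge> 1"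
  shows "psi xs x (k, j) \<ge> r \<and> psi xs y (k, j) = 0"
proof -
  have rp: "r > 0" using r by simp
  have "2 * r \<le> infdist x (xs ` {..<j})" using j1 j(2) by (intro infdist_ge_img) auto
  then have "psi xs x (k, j) \<ge> r" using j1 j(1) r by (simp add: psi_def)
  moreover have "dist x y \<le> dist x (xs j) + dist y (xs j)" by (rule dist_triangle2)
  then have "3 * 2 powr k - dist y (xs j) \<le> 0" using t j(1) r by linarith
  then have "psi xs y (k, j) = 0" using j1 by (simp add: psi_def)
  ultimately show ?thesis by simp
qed

lemma dyadic_scale:
  assumes "a > 0"
  shows "\<exists>k::int. 2 powr k \<le> a \<and> a < 2 * 2 powr k"
proof -
  define k where "k = \<lfloor>log 2 a\<rfloor>"
  have "real_of_int k \<le> log 2 a" unfolding k_def by simp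
  then have "2 powr k \<le> a" using le_log_iff[of 2 a] assms by simp
  moreover have "log 2 a < real_of_int k + 1" unfolding k_def by linarith
  then have "a < 2 powr (real_of_int k + 1)" using log_less_iff[of 2 a] assms by simp
  then have "a < 2 * 2 powr k" by (simp add: powr_add)
  ultimately show ?thesis by blast
qed

context
  fixes xs :: "nat \<Rightarrow> 'x::metric_space" and X :: "'x set"
  assumes dense: "\<And>x e. x \<in> X \<Longrightarrow> e > 0 \<Longrightarrow> \<exists>j. dist x (xs j) < e"
begin

lemma psi_sep:
  assumes x: "x \<in> X" and y: "y \<in> X" and xy: "x \<noteq> y"
  shows "\<exists>z. \<bar>psi xs x z - psi xs y z\<bar> \<ge> dist x y / 10"
proof -
  define t where "t = dist x y"
  have tp: "t > 0" using xy by (simp add: t_def)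
  obtain k :: int where k: "2 powr k \<le> t / 5" "t / 5 < 2 * 2 powr k" using dyadic_scale[of "t/5"] tp by auto
  define r where "r = 2 powr k"
  have rp: "r > 0" by (simp add: r_def)
  have t5: "5 * r \<le> dist x y" "dist x y / 10 < r" using k by (auto simp: r_def t_def)
  have ex: "\<exists>j. dist u (xs j) < 2 * r" if "u \<in> X" for u using dense[OF that] rp by simp
  define jx where "jx = (LEAST j. dist x (xs j) < 2 * r)"
  define jy where "jy = (LEAST j. dist y (xs j) < 2 * r)"
  have jx: "dist x (xs jx) < 2 * r" "\<And>i. i < jx \<Longrightarrow> 2 * r \<le> dist x (xs i)"
    unfolding jx_def using ex[OF x] by (auto intro: LeastI_ex dest: not_less_Least)
  have jy: "dist y (xs jy) < 2 * r" "\<And>i. i < jy \<Longrightarrow> 2 * r \<le> dist y (xs i)"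
    unfolding jy_def using ex[OF y] by (auto intro: LeastI_ex dest: not_less_Least)
  show ?thesis
  proof (cases "jx \<ge> 1")
    case True
    have "psi xs x (k, jx) \<ge> r \<and> psi xs y (k, jx) = 0"
      by (rule psi_sep1[where xs=xs and x=x and y=y and j=jx and r=r and k=k, OF r_def t5(1) jx True])
    then have "\<bar>psi xs x (k, jx) - psi xs y (k, jx)\<bar> \<ge> dist x y / 10" using t5 by simp
    then show ?thesis by blast
  next
    case False
    then have jx0: "jx = 0" by simp
    show ?thesis
    proof (cases "jy \<ge> 1")
      case True
      have "5 * r \<le> dist y x" using t5 by (simp add: dist_commute)
      then have "psi xs y (k, jy) \<ge> r \<and> psi xs x (k, jy) = 0"
        by (rule psi_sep1[where xs=xs and x=y and y=x and j=jy and r=r and k=k, OF r_def _ jy True])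
      then have "\<bar>psi xs x (k, jy) - psi xs y (k, jy)\<bar> \<ge> dist x y / 10" using t5 by simp
      then show ?thesis by blast
    next
      case False
      then have "jy = 0" by simp
      then have "dist x y < 4 * r" using jx(1) jy(1) jx0 dist_triangle2[of x y "xs 0"] by simp
      then show ?thesis using t5 rp by simp
    qed
  qed
qed

lemma psi_finite:
  assumes x: "x \<in> X" and e: "e > 0"
  shows "finite {z. psi xs x z \<ge> e}"
proof -
  define J where "J k = (LEAST j. dist x (xs j) < 2 powr k)" for k :: int
  have Jp: "dist x (xs (J k)) < 2 powr k" for k
    unfolding J_def using dense[OF x, of "2 powr k"] by (auto intro: LeastI_ex)
  define K where "K = {k::int. e / 3 \<le> 2 powr k \<and> 2 powr k < dist x (xs 0)}"
  have sub: "{z. psi xs x z \<ge> e} \<subseteq> (\<Union>k\<in>K. {k} \<times> {..J k})"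
  proof
    fix z assume z: "z \<in> {z. psi xs x z \<ge> e}"
    obtain k n where zkn: "z = (k, n)" by (cases z)
    have pz: "psi xs x (k, n) \<ge> e" using z zkn by simp
    then have n0: "n \<noteq> 0" using e by (auto simp: psi_def split: if_splits)
    then have ab: "3 * 2 powr k - dist x (xs n) \<ge> e" "infdist x (xs ` {..<n}) - 2 powr k \<ge> e"
      using pz e by (auto simp: psi_def max_def min_def split: if_splits)
    have "dist x (xs n) \<ge> 0" by simp
    then have k1: "e / 3 \<le> 2 powr k" using ab(1) by linarith
    have "infdist x (xs ` {..<n}) \<le> dist x (xs 0)" using n0 by (intro infdist_le) auto
    then have k2: "2 powr k < dist x (xs 0)" using ab(2) e by linarith
    have "n \<le> J k"
    proof (rule ccontr)
      assume "\<not> n \<le> J k"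
      then have "infdist x (xs ` {..<n}) \<le> dist x (xs (J k))" by (intro infdist_le) auto
      then show False using Jp[of k] ab(2) e by linarith
    qed
    then show "z \<in> (\<Union>k\<in>K. {k} \<times> {..J k})" using zkn k1 k2 by (auto simp: K_def)
  qed
  have "K \<subseteq> {\<lfloor>log 2 (e/3)\<rfloor> .. \<lceil>log 2 (dist x (xs 0))\<rceil>}"
  proof
    fix k assume "k \<in> K"
    then have k: "e / 3 \<le> 2 powr k" "2 powr k < dist x (xs 0)" by (auto simp: K_def)
    have d0: "dist x (xs 0) > 0" using k(2) by (smt (verit) powr_gt_zero)
    have "log 2 (e/3) \<le> k" using k(1) log_le_iff[of 2 "e/3" k] e by simp
    moreover have "k \<le> log 2 (dist x (xs 0))" using k(2) le_log_iff[of 2 "dist x (xs 0)" k] d0 by simp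
    ultimately show "k \<in> {\<lfloor>log 2 (e/3)\<rfloor> .. \<lceil>log 2 (dist x (xs 0))\<rceil>}"
      by (simp add: floor_le_iff le_ceiling_iff)
  qed
  then have "finite K" by (rule finite_subset) simp
  then have "finite (\<Union>k\<in>K. {k} \<times> {..J k})" by simp
  then show ?thesis using sub finite_subset by blast
qed

end


definition rnd :: "nat \<Rightarrow> real \<Rightarrow> real" where
  "rnd p a = (if \<bar>a\<bar> < eta p then 0 else of_int \<lfloor>a / eta p\<rfloor> * eta p)"

lemma rnd_err: "\<bar>rnd p a - a\<bar> \<le> eta p"
proof (cases "\<bar>a\<bar> < eta p")
  case True then show ?thesis by (simp add: rnd_def)
next
  case False
  define e where "e = eta p"
  have e: "e > 0" by (simp add: e_def eta_pos)
  define q where "q = \<lfloor>a / e\<rfloor>"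
  have "of_int q \<le> a / e" unfolding q_def by simp
  then have 1: "of_int q * e \<le> a" using e by (simp add: pos_le_divide_eq)
  have "a / e < of_int q + 1" unfolding q_def by linarith
  then have "a < (of_int q + 1) * e" using e by (simp add: pos_divide_less_eq)
  then have 2: "a - e < of_int q * e" by (simp add: algebra_simps)
  have "rnd p a = of_int q * e" using False by (simp add: rnd_def q_def e_def)
  then show ?thesis using 1 2 by (simp add: e_def abs_if)
qed

lemma eta_Rats: "eta p \<in> \<rat>" by (simp add: eta_def)

lemma rnd_Rats: "rnd p a \<in> \<rat>"
  by (simp add: rnd_def eta_Rats)

lemma rnd_nz: "rnd p a \<noteq> 0 \<Longrightarrow> \<bar>a\<bar> \<ge> eta p"
  by (auto simp: rnd_def split: if_splits)

lemma eta_anti: "n \<le> m \<Longrightarrow> eta m \<le> eta n"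
  unfolding eta_def by (intro divide_left_mono power_increasing) auto

lemma final_emb:
  fixes H :: "(nat \<Rightarrow> real) \<Rightarrow> 'm::complete_space" and X :: "'x::metric_space set"
  assumes infN: "infinite N" and L: "L > 0" and U: "U \<ge> 0"
    and Hb: "\<forall>v\<in>Wset N. \<forall>w\<in>Wset N. L * dinf v w \<le> dist (H v) (H w) \<and> dist (H v) (H w) \<le> U * dinf v w"
    and sep: "separable_set X"
  shows "\<exists>F :: 'x \<Rightarrow> 'm. bilip_embedding dist X dist UNIV F"
proof (cases "X = {}")
  case True
  have "bilip_embedding dist X dist UNIV (\<lambda>_::'x. undefined::'m)"
    unfolding bilip_embedding_def True by (intro conjI exI[of _ "1::real"]) auto
  then show ?thesis by (rule exI[where x="\<lambda>_::'x. undefined::'m"])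
next
  case False
  obtain Dd where Dd: "countable Dd" "Dd \<subseteq> X" "X \<subseteq> closure Dd"
    using sep unfolding separable_set_def by blast
  have Dne: "Dd \<noteq> {}" using Dd False by auto
  define xs where "xs = from_nat_into Dd"
  have dense: "\<exists>j. dist x (xs j) < e" if xX: "x \<in> X" and e: "e > 0" for x e
  proof -
    have "x \<in> closure Dd" using xX Dd by blast
    then have "\<exists>y\<in>Dd. dist y x < e" using e unfolding closure_approachable by blast
    then obtain y where "y \<in> Dd" "dist y x < e" by blast
    moreover have "y \<in> range xs" using \<open>y \<in> Dd\<close> Dne Dd(1) unfolding xs_def by simp
    ultimately show ?thesis by (auto simp: dist_commute)
  qed
  define \<iota> where "\<iota> z = enumerate N (to_nat z)" for z :: "int \<times> nat"
  have inj: "inj \<iota>"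
  proof (rule injI)
    fix a b assume "\<iota> a = \<iota> b"
    then have eq: "enumerate N (to_nat a) = enumerate N (to_nat b)" unfolding \<iota>_def .
    have "to_nat a = to_nat b"
    proof (rule ccontr)
      assume "to_nat a \<noteq> to_nat b"
      then have "to_nat a < to_nat b \<or> to_nat b < to_nat a" by arith
      then show False
      proof
        assume "to_nat a < to_nat b"
        from enumerate_mono[OF this infN] eq show False by simp
      next
        assume "to_nat b < to_nat a"
        from enumerate_mono[OF this infN] eq show False by simp
      qed
    qed
    then show "a = b" by simp
  qed
  have rN: "\<iota> z \<in> N" for z unfolding \<iota>_def by (rule enumerate_in_set[OF infN])
  define u where "u p x = (\<lambda>i. if i \<in> range \<iota> then rnd p (psi xs x (inv \<iota> i)) else 0)" for p x
  have u_i: "u p x (\<iota> z) = rnd p (psi xs x z)" for p x z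
    unfolding u_def using inj by simp
  have supp: "{i. u p x i \<noteq> 0} \<subseteq> \<iota> ` {z. psi xs x z \<ge> eta p}" for p x
  proof
    fix i assume i: "i \<in> {i. u p x i \<noteq> 0}"
    then have "i \<in> range \<iota>" by (auto simp: u_def split: if_splits)
    then obtain z where z: "i = \<iota> z" by blast
    have "rnd p (psi xs x z) \<noteq> 0" using i z u_i by simp
    then have "\<bar>psi xs x z\<bar> \<ge> eta p" by (rule rnd_nz)
    then have "psi xs x z \<ge> eta p" using psi_nonneg[of xs x z] by simp
    then show "i \<in> \<iota> ` {z. psi xs x z \<ge> eta p}" using z by blast
  qed
  have fin_supp: "finite {i. u p x i \<noteq> 0}" if "x \<in> X" for p x
  proof -
    have "finite {z. psi xs x z \<ge> eta p}" using psi_finite[OF dense that eta_pos] by blast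
    then show ?thesis using supp finite_subset by blast
  qed
  have uW: "u p x \<in> Wset N" if "x \<in> X" for p x
  proof -
    have "\<forall>i. u p x i \<noteq> 0 \<longrightarrow> i \<in> N" using rN by (auto simp: u_def)
    moreover have "\<forall>i. u p x i \<in> \<rat>" by (simp add: u_def rnd_Rats)
    ultimately show ?thesis using fin_supp[OF that] by (simp add: Wset_def)
  qed
  have u_close: "\<bar>u p x i - u q x i\<bar> \<le> eta p + eta q" for p q x i
  proof (cases "i \<in> range \<iota>")
    case True
    define a where "a = psi xs x (inv \<iota> i)"
    have "\<bar>rnd p a - rnd q a\<bar> \<le> eta p + eta q"
      using rnd_err[of p a] rnd_err[of q a] by linarith
    then show ?thesis using True by (simp add: u_def a_def)
  next
    case False then show ?thesis using eta_pos[of p] eta_pos[of q] by (simp add: u_def)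
  qed
  have u_lip: "\<bar>u p x i - u p y i\<bar> \<le> dist x y + 2 * eta p" for p x y i
  proof (cases "i \<in> range \<iota>")
    case True
    define z where "z = inv \<iota> i"
    have "\<bar>rnd p (psi xs x z) - rnd p (psi xs y z)\<bar> \<le> dist x y + 2 * eta p"
      using rnd_err[of p "psi xs x z"] rnd_err[of p "psi xs y z"] psi_lip[of xs x z y] by linarith
    then show ?thesis using True by (simp add: u_def z_def)
  next
    case False then show ?thesis using eta_pos[of p] by (simp add: u_def)
  qed
  have fin_diff: "finite {i. u p x i \<noteq> u p y i}" if "x \<in> X" "y \<in> X" for p x y
  proof -
    have "{i. u p x i \<noteq> u p y i} \<subseteq> {i. u p x i \<noteq> 0} \<union> {i. u p y i \<noteq> 0}" by auto
    then show ?thesis using fin_supp[OF that(1)] fin_supp[OF that(2)] finite_subset by blast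
  qed
  have conv: "(\<lambda>p. H (u p x)) \<longlonglongrightarrow> lim (\<lambda>p. H (u p x))" if x: "x \<in> X" for x
  proof -
    have "dist (H (u m x)) (H (u n x)) \<le> 2 * U * eta n" if "0 \<le> n" "n \<le> m" for m n
    proof -
      have "dist (H (u m x)) (H (u n x)) \<le> U * dinf (u m x) (u n x)"
        using Hb uW[OF x] by blast
      moreover have "dinf (u m x) (u n x) \<le> eta m + eta n" by (rule dinf_le) (rule u_close)
      then have "U * dinf (u m x) (u n x) \<le> U * (eta m + eta n)" using U by (rule mult_left_mono)
      moreover have "U * (eta m + eta n) \<le> U * (2 * eta n)" using eta_anti[OF \<open>n \<le> m\<close>] U
        by (intro mult_left_mono) auto
      ultimately show ?thesis by simp
    qed
    moreover have "(\<lambda>n. 2 * U * eta n) \<longlonglongrightarrow> 0" using tendsto_mult_right_zero[OF eta_lim, of "2 * U"] by simp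
    ultimately have "Cauchy (\<lambda>p. H (u p x))" by (intro cauchy_bound[of "\<lambda>n. 2 * U * eta n" 0]) auto
    then show ?thesis by (simp add: Cauchy_convergent_iff convergent_LIMSEQ_iff)
  qed
  define F where "F x = lim (\<lambda>p. H (u p x))" for x
  have bounds: "L / 10 * dist x y \<le> dist (F x) (F y) \<and> dist (F x) (F y) \<le> U * dist x y"
    if x: "x \<in> X" and y: "y \<in> X" for x y
  proof (cases "x = y")
    case True then show ?thesis by simp
  next
    case False
    define t where "t = dist x y"
    obtain z where z: "\<bar>psi xs x z - psi xs y z\<bar> \<ge> t / 10"
      using psi_sep[OF dense x y False] unfolding t_def by blast
    have lo: "L * (t / 10 - 2 * eta p) \<le> dist (H (u p x)) (H (u p y))" for p
    proof -
      have "\<bar>u p x (\<iota> z) - u p y (\<iota> z)\<bar> \<le> dinf (u p x) (u p y)"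
        by (rule dinf_ge(1)[OF fin_diff[OF x y]])
      moreover have "\<bar>u p x (\<iota> z) - u p y (\<iota> z)\<bar> \<ge> t / 10 - 2 * eta p"
        unfolding u_i using rnd_err[of p "psi xs x z"] rnd_err[of p "psi xs y z"] z by linarith
      ultimately have "t / 10 - 2 * eta p \<le> dinf (u p x) (u p y)" by linarith
      then have "L * (t / 10 - 2 * eta p) \<le> L * dinf (u p x) (u p y)" using L by simp
      moreover have "L * dinf (u p x) (u p y) \<le> dist (H (u p x)) (H (u p y))"
        using Hb uW[OF x] uW[OF y] by blast
      ultimately show ?thesis by linarith
    qed
    have hi: "dist (H (u p x)) (H (u p y)) \<le> U * (t + 2 * eta p)" for p
    proof -
      have "dinf (u p x) (u p y) \<le> t + 2 * eta p" unfolding t_def by (rule dinf_le) (rule u_lip)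
      then have "U * dinf (u p x) (u p y) \<le> U * (t + 2 * eta p)" using U by (rule mult_left_mono)
      moreover have "dist (H (u p x)) (H (u p y)) \<le> U * dinf (u p x) (u p y)"
        using Hb uW[OF x] uW[OF y] by blast
      ultimately show ?thesis by linarith
    qed
    have lim: "(\<lambda>p. dist (H (u p x)) (H (u p y))) \<longlonglongrightarrow> dist (F x) (F y)"
      unfolding F_def by (intro tendsto_dist conv x y)
    have l1: "(\<lambda>p. L * (t / 10 - 2 * eta p)) \<longlonglongrightarrow> L * (t / 10 - 2 * 0)"
      by (intro tendsto_intros eta_lim)
    have l2: "(\<lambda>p. U * (t + 2 * eta p)) \<longlonglongrightarrow> U * (t + 2 * 0)"
      by (intro tendsto_intros eta_lim)
    have "L * (t / 10 - 2 * 0) \<le> dist (F x) (F y)"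
      using lo by (intro LIMSEQ_le[OF l1 lim]) blast
    moreover have "dist (F x) (F y) \<le> U * (t + 2 * 0)"
      using hi by (intro LIMSEQ_le[OF lim l2]) blast
    ultimately show ?thesis unfolding t_def by simp
  qed
  define s where "s = L / 10"
  define D where "D = max 1 (10 * U / L)"
  have s: "s > 0" using L by (simp add: s_def)
  have D: "D \<ge> 1" by (simp add: D_def)
  have sD: "U \<le> s * D"
  proof -
    have "L / 10 * (10 * U / L) \<le> L / 10 * max 1 (10 * U / L)" using L by (intro mult_left_mono) auto
    moreover have "L / 10 * (10 * U / L) = U" using L by (simp add: field_simps)
    ultimately show ?thesis by (simp add: s_def D_def)
  qed
  have "\<forall>x\<in>X. \<forall>y\<in>X. s * dist x y \<le> dist (F x) (F y) \<and> dist (F x) (F y) \<le> s * D * dist x y"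
  proof (intro ballI)
    fix x y assume x: "x \<in> X" and y: "y \<in> X"
    have "U * dist x y \<le> s * D * dist x y" using sD by (intro mult_right_mono) auto
    then show "s * dist x y \<le> dist (F x) (F y) \<and> dist (F x) (F y) \<le> s * D * dist x y"
      using bounds[OF x y] by (simp add: s_def)
  qed
  then have "bilip_embedding dist X dist UNIV F" unfolding bilip_embedding_def using s D by blast
  then show ?thesis by (rule exI[where x=F])
qed


lemma VV_sub_Q:
  assumes "A \<subseteq> G" "G \<in> Fam" shows "VV A \<subseteq> schreier_Q Fam"
proof
  fix v assume v: "v \<in> VV A"
  have "\<forall>i\<in>G. v i \<in> \<rat>"
  proof
    fix i assume "i \<in> G"
    show "v i \<in> \<rat>"
    proof (cases "i \<in> A")
      case True then show ?thesis using v Gr_Rats by (auto simp: VV_def)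
    next
      case False then show ?thesis using v by (simp add: VV_def)
    qed
  qed
  moreover have "v = (\<lambda>i. if i \<in> G then v i else 0)"
  proof
    fix i show "v i = (if i \<in> G then v i else 0)" using v assms(1) by (auto simp: VV_def)
  qed
  ultimately show "v \<in> schreier_Q Fam" unfolding schreier_Q_def using assms(2) by blast
qed

lemma node_ok:
  fixes g :: "(nat \<Rightarrow> real) \<Rightarrow> 'm::metric_space"
  assumes apC: "\<And>p e. e > 0 \<Longrightarrow> ap p e \<in> C \<and> dist (ap p e) p < e"
    and emb: "\<forall>v\<in>D. \<forall>w\<in>D. s * dinf v w \<le> dist (g v) (g w) \<and> dist (g v) (g w) \<le> s * De * dinf v w"
    and Ls: "L \<le> s" "s * De \<le> U"
    and fin: "finite A" and sub: "VV A \<subseteq> D"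
  shows "(A, restrict (\<lambda>v. ap (g v) (eta (card A) / 4)) (VV A)) \<in> Tn L U C"
proof -
  define e where "e = eta (card A) / 4"
  have e: "e > 0" using eta_pos by (simp add: e_def)
  define h where "h = restrict (\<lambda>v. ap (g v) e) (VV A)"
  have hC: "h \<in> VV A \<rightarrow>\<^sub>E C" unfolding h_def using apC[OF e] by simp
  have hd: "dist (h v) (g v) < e" if "v \<in> VV A" for v
    using apC[OF e] that by (simp add: h_def)
  have b: "L * dinf v w - eta (card A) \<le> dist (h v) (h w) \<and> dist (h v) (h w) \<le> U * dinf v w + eta (card A)"
    if v: "v \<in> VV A" and w: "w \<in> VV A" for v w
  proof -
    have d0: "0 \<le> dinf v w" by (rule dinf_ge(2)[OF VV_fin_diff[OF fin v w]])
    have em: "s * dinf v w \<le> dist (g v) (g w) \<and> dist (g v) (g w) \<le> s * De * dinf v w"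
      using emb sub v w by blast
    have "L * dinf v w \<le> s * dinf v w" using Ls(1) d0 by (rule mult_right_mono)
    moreover have "s * De * dinf v w \<le> U * dinf v w" using Ls(2) d0 by (rule mult_right_mono)
    moreover have "dist (h v) (h w) \<le> dist (h v) (g v) + dist (g v) (h w)" by (rule dist_triangle)
    moreover have "dist (g v) (h w) \<le> dist (g v) (g w) + dist (g w) (h w)" by (rule dist_triangle)
    moreover have "dist (g v) (g w) \<le> dist (g v) (h v) + dist (h v) (g w)" by (rule dist_triangle)
    moreover have "dist (h v) (g w) \<le> dist (h v) (h w) + dist (h w) (g w)" by (rule dist_triangle)
    moreover have "dist (h v) (g v) < e" "dist (h w) (g w) < e" using hd v w by auto
    moreover have "dist (g w) (h w) = dist (h w) (g w)" "dist (g v) (h v) = dist (h v) (g v)"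
      by (simp_all add: dist_commute)
    ultimately show ?thesis using em unfolding e_def by linarith
  qed
  show ?thesis using fin hC b unfolding Tn_def h_def e_def by blast
qed

lemma node_ch:
  fixes g :: "(nat \<Rightarrow> real) \<Rightarrow> 'm::metric_space"
  assumes apC: "\<And>p e. e > 0 \<Longrightarrow> ap p e \<in> C \<and> dist (ap p e) p < e"
    and fin: "finite A" and lt: "\<forall>a\<in>A. a < m"
  shows "chn (A, restrict (\<lambda>v. ap (g v) (eta (card A) / 4)) (VV A))
             (insert m A, restrict (\<lambda>v. ap (g v) (eta (card (insert m A)) / 4)) (VV (insert m A)))"
proof -
  have mA: "m \<notin> A" using lt by blast
  have cm: "card (insert m A) = Suc (card A)" using fin mA by simp
  define e where "e = eta (card A) / 4"
  define e' where "e' = eta (card (insert m A)) / 4"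
  have e: "e > 0" "e' > 0" using eta_pos by (simp_all add: e_def e'_def)
  have ee: "e' + e \<le> eta (card A)" unfolding e_def e'_def cm eta_Suc using eta_pos[of "card A"] by simp
  have "dist (restrict (\<lambda>v. ap (g v) e') (VV (insert m A)) v) (restrict (\<lambda>v. ap (g v) e) (VV A) v) \<le> eta (card A)"
    if v: "v \<in> VV A" for v
  proof -
    have v': "v \<in> VV (insert m A)" using VV_mono[OF fin mA] v by blast
    have "dist (ap (g v) e') (ap (g v) e) \<le> dist (ap (g v) e') (g v) + dist (ap (g v) e) (g v)"
      by (rule dist_triangle2)
    moreover have "dist (ap (g v) e') (g v) < e'" "dist (ap (g v) e) (g v) < e" using apC e by auto
    ultimately show ?thesis using v v' ee by simp
  qed
  then show ?thesis unfolding chn_def e_def e'_def using lt by auto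
qed


lemma nat_ceil_ge: "(x::real) \<le> real (nat \<lceil>x\<rceil>)"
proof -
  have "x \<le> real_of_int \<lceil>x\<rceil>" by simp
  also have "\<dots> \<le> real (nat \<lceil>x\<rceil>)" by linarith
  finally show ?thesis .
qed

theorem theoremA:
  fixes seq :: "'i::wellorder \<Rightarrow> nat \<Rightarrow> 'i" and S :: "'i \<Rightarrow> nat set set"
  assumes omega1_pred: "\<forall>a::'i. countable {b. b < a}"
    and omega1_uncount: "\<not> countable (UNIV :: 'i set)"
    and "fundamental_system seq"
    and "schreier_system seq S"
    and M_separable: "separable_set (UNIV :: 'm::complete_space set)"
    and "\<forall>a. \<exists>f :: (nat \<Rightarrow> real) \<Rightarrow> 'm. bilip_embedding dinf (schreier_Q (S a)) dist UNIV f"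
  shows "\<forall>X :: 'x::metric_space set. separable_set X \<longrightarrow>
           (\<exists>f :: 'x \<Rightarrow> 'm. bilip_embedding dist X dist UNIV f)"
proof -
  note fs = assms(3) and ss = assms(4) and embs = assms(6)
  obtain C :: "'m set" where C: "countable C" "UNIV \<subseteq> closure C"
    using M_separable unfolding separable_set_def by blast
  have Cd: "\<exists>c. c \<in> C \<and> dist c p < e" if e: "e > 0" for p :: 'm and e :: real
  proof -
    have "p \<in> closure C" using C by blast
    then have "\<exists>c\<in>C. dist c p < e" using e unfolding closure_approachable by blast
    then show ?thesis by blast
  qed
  define ap where "ap p e = (SOME c. c \<in> C \<and> dist c p < e)" for p :: 'm and e :: real
  have apC: "ap p e \<in> C \<and> dist (ap p e) p < e" if "e > 0" for p e
    unfolding ap_def by (rule someI_ex[OF Cd[OF that]])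
  define EM where "EM a g s D \<longleftrightarrow> s > 0 \<and> D \<ge> 1 \<and> (\<forall>x\<in>schreier_Q (S a). \<forall>y\<in>schreier_Q (S a).
      s * dinf x y \<le> dist (g x) (g y) \<and> dist (g x) (g y) \<le> s * D * dinf x y)"
    for a and g :: "(nat \<Rightarrow> real) \<Rightarrow> 'm" and s D :: real
  have ex: "\<forall>a. \<exists>g. \<exists>s. \<exists>D. EM a g s D"
  proof
    fix a
    obtain g :: "(nat \<Rightarrow> real) \<Rightarrow> 'm" where g: "bilip_embedding dinf (schreier_Q (S a)) dist UNIV g"
      using embs by blast
    then obtain s D where "s > 0" "D \<ge> 1" "\<forall>x\<in>schreier_Q (S a). \<forall>y\<in>schreier_Q (S a).
      s * dinf x y \<le> dist (g x) (g y) \<and> dist (g x) (g y) \<le> s * D * dinf x y"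
      unfolding bilip_embedding_def by blast
    then have "EM a g s D" unfolding EM_def by blast
    then show "\<exists>g. \<exists>s. \<exists>D. EM a g s D" by blast
  qed
  from choice[OF ex] obtain gf where gf: "\<forall>a. \<exists>s. \<exists>D. EM a (gf a) s D" by blast
  from choice[OF gf] obtain sf where sf: "\<forall>a. \<exists>D. EM a (gf a) (sf a) D" by blast
  from choice[OF sf] obtain Df where Df: "\<forall>a. EM a (gf a) (sf a) (Df a)" by blast
  define key where "key a = (nat \<lceil>1 / sf a\<rceil>, nat \<lceil>sf a * Df a\<rceil>)" for a
  obtain \<kappa> where \<kappa>: "\<forall>a. \<exists>b. a \<le> b \<and> key b = \<kappa>"
    using cofinal_key[OF omega1_pred omega1_uncount, of key] by blast
  obtain k1 k2 where k12: "\<kappa> = (k1, k2)" by (cases \<kappa>)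
  obtain b0 where b0: "key b0 = \<kappa>" using \<kappa> by blast
  have sfpos: "sf a > 0" for a using Df by (simp add: EM_def)
  have k1pos: "k1 > 0"
  proof -
    have "1 / sf b0 > 0" using sfpos[of b0] by simp
    then have "\<lceil>1 / sf b0\<rceil> > 0" by simp
    then have "nat \<lceil>1 / sf b0\<rceil> > 0" by simp
    moreover have "k1 = nat \<lceil>1 / sf b0\<rceil>" using b0 k12 by (simp add: key_def)
    ultimately show ?thesis by simp
  qed
  define L where "L = 1 / real k1"
  define U where "U = real k2"
  have Lpos: "L > 0" using k1pos by (simp add: L_def)
  have Unn: "U \<ge> 0" by (simp add: U_def)
  have LU: "L \<le> sf b \<and> sf b * Df b \<le> U" if kb: "key b = \<kappa>" for b
  proof -
    have k1e: "k1 = nat \<lceil>1 / sf b\<rceil>" "k2 = nat \<lceil>sf b * Df b\<rceil>" using kb k12 by (auto simp: key_def)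
    have "1 / sf b \<le> real k1" unfolding k1e by (rule nat_ceil_ge)
    then have "1 \<le> sf b * real k1" using sfpos[of b] by (simp add: divide_le_eq mult.commute)
    then have "L \<le> sf b" unfolding L_def using k1pos by (simp add: divide_le_eq mult.commute)
    moreover have "sf b * Df b \<le> U" unfolding U_def k1e by (rule nat_ceil_ge)
    ultimately show ?thesis by blast
  qed
  define \<Phi> where "\<Phi> b A = (A, restrict (\<lambda>v. ap (gf b v) (eta (card A) / 4)) (VV A))" for b A
  have Rk\<Phi>: "Rk (Tn L U C) chn b (\<Phi> b {})" if kb: "key b = \<kappa>" for b
  proof -
    define F where "F = {A. \<exists>G\<in>S b. A \<subseteq> G}"
    have EMb: "EM b (gf b) (sf b) (Df b)" using Df by blast
    have embb: "\<forall>v\<in>schreier_Q (S b). \<forall>w\<in>schreier_Q (S b). sf b * dinf v w \<le> dist (gf b v) (gf b w) \<and>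
        dist (gf b v) (gf b w) \<le> sf b * Df b * dinf v w" using EMb by (simp add: EM_def)
    have inT: "\<Phi> b A \<in> Tn L U C" if fA: "finite A" and AF: "A \<in> F" for A
    proof -
      obtain G where G: "G \<in> S b" "A \<subseteq> G" using AF by (auto simp: F_def)
      have "VV A \<subseteq> schreier_Q (S b)" by (rule VV_sub_Q[OF G(2) G(1)])
      then show ?thesis unfolding \<Phi>_def
        using node_ok[where ap=ap and C=C and g="gf b" and s="sf b" and De="Df b" and L=L and U=U,
            OF apC embb _ _ fA] LU[OF kb] by blast
    qed
    have inch: "chn (\<Phi> b A) (\<Phi> b (insert m A))" if fA: "finite A" and lt: "\<forall>a\<in>A. a < m" for A m
      unfolding \<Phi>_def by (rule node_ch[where ap=ap and C=C, OF apC fA lt])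
    have Fdown: "A \<in> F" if "A \<subseteq> B" "B \<in> F" for A B using that by (auto simp: F_def)
    have one: "{1} \<in> S b" by (rule S_single[OF fs ss]) simp
    have "Rk (Tn L U C) chn b (\<Phi> b {})"
    proof (rule rank_lemma[OF fs ss omega1_pred omega1_uncount, where \<Phi>="\<Phi> b" and F=F and A="{}" and n=1
          and T="Tn L U C" and ch=chn])
      show "\<And>A. finite A \<Longrightarrow> A \<in> F \<Longrightarrow> \<Phi> b A \<in> Tn L U C" using inT by blast
      show "\<And>A m. finite A \<Longrightarrow> insert m A \<in> F \<Longrightarrow> \<forall>a\<in>A. a < m \<Longrightarrow> chn (\<Phi> b A) (\<Phi> b (insert m A))"
        using inch by blast
      show "\<And>A B. A \<subseteq> B \<Longrightarrow> B \<in> F \<Longrightarrow> A \<in> F" using Fdown by blast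
      show "finite {}" by simp
      show "{} \<in> F" using one by (auto simp: F_def)
      show "\<forall>a\<in>{}. a < 1" by simp
      show "\<forall>B\<in>S b. nle 1 B \<longrightarrow> {} \<union> B \<in> F" by (auto simp: F_def)
    qed
    then show ?thesis .
  qed
  have all: "\<forall>a::'i. \<exists>t\<in>{t \<in> Tn L U C. fst t = {}}. Rk (Tn L U C) chn a t"
  proof
    fix a :: 'i
    obtain b where b: "a \<le> b" "key b = \<kappa>" using \<kappa> by blast
    have R: "Rk (Tn L U C) chn b (\<Phi> b {})" by (rule Rk\<Phi>[OF b(2)])
    have "\<Phi> b {} \<in> Tn L U C" by (rule Rk_T[OF R])
    moreover have "fst (\<Phi> b {}) = {}" by (simp add: \<Phi>_def)
    moreover have "Rk (Tn L U C) chn a (\<Phi> b {})" by (rule Rk_mono[OF R b(1)])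
    ultimately show "\<exists>t\<in>{t \<in> Tn L U C. fst t = {}}. Rk (Tn L U C) chn a t" by blast
  qed
  have cc: "\<forall>t\<in>Tn L U C. countable {c. chn t c \<and> c \<in> Tn L U C}"
    using countable_children[OF C(1)] by blast
  have "\<exists>f. f 0 \<in> {t \<in> Tn L U C. fst t = {}} \<and> (\<forall>n. f n \<in> Tn L U C \<and> chn (f n) (f (Suc n)))"
    by (rule Rk_branch[OF omega1_pred omega1_uncount cc countable_roots[OF C(1)] all])
  then obtain f where f0: "f 0 \<in> {t \<in> Tn L U C. fst t = {}}"
    and fn: "\<forall>n. f n \<in> Tn L U C \<and> chn (f n) (f (Suc n))" by blast
  have "\<exists>N (H::(nat \<Rightarrow> real) \<Rightarrow> 'm). infinite N \<and> (\<forall>v\<in>Wset N. \<forall>w\<in>Wset N.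
            L * dinf v w \<le> dist (H v) (H w) \<and> dist (H v) (H w) \<le> U * dinf v w)"
    by (rule branch_emb[where C=C]) (use fn f0 in simp_all)
  then obtain N and H :: "(nat \<Rightarrow> real) \<Rightarrow> 'm" where NH: "infinite N" "\<forall>v\<in>Wset N. \<forall>w\<in>Wset N.
            L * dinf v w \<le> dist (H v) (H w) \<and> dist (H v) (H w) \<le> U * dinf v w" by blast
  show ?thesis
  proof (intro allI impI)
    fix X :: "'x set" assume "separable_set X"
    then show "\<exists>f :: 'x \<Rightarrow> 'm. bilip_embedding dist X dist UNIV f"
      by (rule final_emb[OF NH(1) Lpos Unn NH(2)])
  qed
qed


end
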